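(* Let $u(n)$ be a sequence of nonnegative integers with $\lim_{n\to\infty}u(n)=\infty$, and for each $n$ let $A:\widehat{\mathbb{Z}}^{n+u(n)}\to\widehat{\mathbb{Z}}^n$ be a random $n\times(n+u(n))$ matrix whose entries are independent and each distributed according to the Haar probability measure on $\widehat{\mathbb{Z}}$. Then \[\lim_{n\to\infty}\mathbb{P}(A\text{ is surjective})=1.\]
   Context: $\widehat{\mathbb{Z}}=\prod_{p\text{ prime}}\mathbb{Z}_p$ is the profinite completion of $\mathbb{Z}$, with its Haar probability measure (the product of the Haar probability measures on the $p$-adic integers $\mathbb{Z}_p$). *)

theory Defs
  imports "HOL-Probability.Probability"
begin

text \<open>Model of the profinite integers: by the Chinese remainder theorem
  Zhat = prod_p Z_p, and each p-adic integer is written by its p-adic digit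
  expansion sum_k d_k p^k with digits d_k in {0..<p}.  An element of Zhat is
  thus an (extensional) digit function on index pairs (p,k), p prime, k :: nat.\<close>

definition zhat_idx :: "(nat \<times> nat) set" where
  "zhat_idx = {(p, k). prime p}"

definition zhat_space :: "(nat \<times> nat \<Rightarrow> nat) set" where
  "zhat_space = (\<Pi>\<^sub>E (p, k)\<in>zhat_idx. {0..<p})"

text \<open>Haar probability measure on Zhat: product over primes of the Haar
  measures on Z_p, the latter being the product of uniform measures on the digits.\<close>
definition zhat_haar :: "(nat \<times> nat \<Rightarrow> nat) measure" where
  "zhat_haar = (\<Pi>\<^sub>M (p, k)\<in>zhat_idx. uniform_count_measure {0..<p})"

definition zres :: "(nat \<times> nat \<Rightarrow> nat) \<Rightarrow> nat \<Rightarrow> nat \<Rightarrow> int" where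
  "zres x p k = (\<Sum>j<k. int (x (p, j)) * int p ^ j)"

text \<open>Equality in Zhat of (sum_j a_j * x_j) and y: equality of all components in
  Z_p = lim Z/p^k Z, i.e. congruence modulo every p^k.\<close>
definition zhat_lincomb_eq ::
  "nat \<Rightarrow> (nat \<Rightarrow> nat \<times> nat \<Rightarrow> nat) \<Rightarrow> (nat \<Rightarrow> nat \<times> nat \<Rightarrow> nat) \<Rightarrow> (nat \<times> nat \<Rightarrow> nat) \<Rightarrow> bool" where
  "zhat_lincomb_eq m a x y \<longleftrightarrow>
     (\<forall>p k. prime p \<longrightarrow>
        (\<Sum>j<m. zres (a j) p k * zres (x j) p k) mod (int p ^ k) = zres y p k mod (int p ^ k))"

definition zhat_mat_surj ::
  "nat \<Rightarrow> nat \<Rightarrow> (nat \<times> nat \<Rightarrow> nat \<times> nat \<Rightarrow> nat) \<Rightarrow> bool" where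
  "zhat_mat_surj n m A \<longleftrightarrow>
     (\<forall>y \<in> {..<n} \<rightarrow>\<^sub>E zhat_space. \<exists>x \<in> {..<m} \<rightarrow>\<^sub>E zhat_space.
        \<forall>i<n. zhat_lincomb_eq m (\<lambda>j. A (i, j)) x (y i))"

definition zhat_random_matrix :: "nat \<Rightarrow> nat \<Rightarrow> (nat \<times> nat \<Rightarrow> nat \<times> nat \<Rightarrow> nat) measure" where
  "zhat_random_matrix n m = (\<Pi>\<^sub>M ij\<in>{..<n} \<times> {..<m}. zhat_haar)"

end

theory Submission
  imports Defs "HOL-Number_Theory.Cong"
begin

lemma space_haar: "space zhat_haar = zhat_space"
  unfolding zhat_haar_def zhat_space_def space_PiM
  by (simp add: space_uniform_count_measure case_prod_beta')

lemma haar_prob: "prob_space zhat_haar"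
  unfolding zhat_haar_def
  by (rule prob_space_PiM) (auto simp: zhat_idx_def prime_gt_0_nat intro!: prob_space_uniform_count_measure)

lemma cyl_eq:
  assumes "prime p"
  shows "{x\<in>zhat_space. x (p,0) = c} = prod_emb zhat_idx (\<lambda>(p, k). uniform_count_measure {0..<p}) {(p,0)} (\<Pi>\<^sub>E i\<in>{(p,0)}. {c})"
proof -
  have sp: "(\<Pi>\<^sub>E i\<in>zhat_idx. space (case i of (p, k) \<Rightarrow> uniform_count_measure {0..<p})) = zhat_space"
    using space_haar unfolding zhat_haar_def space_PiM .
  show ?thesis unfolding prod_emb_def sp
    apply (auto simp: restrict_def fun_eq_iff PiE_iff)
    by metis
qed

lemma cyl_sets:
  assumes "prime p" "c < p"
  shows "{x\<in>zhat_space. x (p,0) = c} \<in> sets zhat_haar"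
  unfolding cyl_eq[OF assms(1)] zhat_haar_def
  apply (rule sets_PiM_I)
  using assms by (auto simp: zhat_idx_def sets_uniform_count_measure)

lemma cyl_measure:
  assumes "prime p" "c < p"
  shows "emeasure zhat_haar {x\<in>zhat_space. x (p,0) = c} = ennreal (1 / real p)"
  unfolding cyl_eq[OF assms(1)] zhat_haar_def
  apply (subst emeasure_PiM_emb)
  using assms by (auto simp: zhat_idx_def prime_gt_0_nat sets_uniform_count_measure
      intro!: prob_space_uniform_count_measure simp: emeasure_uniform_count_measure divide_ennreal ennreal_of_nat_eq_real_of_nat)

lemma space_mat: "space (zhat_random_matrix n m) = (\<Pi>\<^sub>E ij\<in>{..<n} \<times> {..<m}. zhat_space)"
  unfolding zhat_random_matrix_def space_PiM space_haar ..

lemma mat_prob: "prob_space (zhat_random_matrix n m)"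
  unfolding zhat_random_matrix_def by (rule prob_space_PiM) (rule haar_prob)

definition cylC :: "nat \<Rightarrow> nat \<Rightarrow> nat \<Rightarrow> (nat \<times> nat \<Rightarrow> nat) \<Rightarrow> (nat \<times> nat \<Rightarrow> nat \<times> nat \<Rightarrow> nat) set" where
  "cylC n m p c = (\<Pi>\<^sub>E ij\<in>{..<n} \<times> {..<m}. {x\<in>zhat_space. x (p,0) = c ij})"

lemma cylC_sets:
  assumes "prime p" "c \<in> (\<Pi>\<^sub>E ij\<in>{..<n} \<times> {..<m}. {0..<p})"
  shows "cylC n m p c \<in> sets (zhat_random_matrix n m)"
  unfolding cylC_def zhat_random_matrix_def
  apply (rule sets_PiM_I_finite)
  using assms by (auto intro!: cyl_sets simp: PiE_iff)

lemma cylC_measure: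
  assumes "prime p" "c \<in> (\<Pi>\<^sub>E ij\<in>{..<n} \<times> {..<m}. {0..<p})"
  shows "measure (zhat_random_matrix n m) (cylC n m p c) = (1 / real p) ^ (n * m)"
proof -
  interpret product_sigma_finite "\<lambda>_. zhat_haar"
    unfolding product_sigma_finite_def
    using haar_prob prob_space_imp_sigma_finite by blast
  have "emeasure (zhat_random_matrix n m) (cylC n m p c) =
     (\<Prod>ij\<in>{..<n} \<times> {..<m}. emeasure zhat_haar {x\<in>zhat_space. x (p,0) = c ij})"
    unfolding cylC_def zhat_random_matrix_def
    apply (rule emeasure_PiM)
    using assms by (auto intro!: cyl_sets simp: PiE_iff)
  also have "\<dots> = (\<Prod>ij\<in>{..<n} \<times> {..<m}. ennreal (1 / real p))"
    apply (rule prod.cong[OF refl])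
    apply (subst cyl_measure)
    using assms prime_gt_0_nat[of p] by (auto simp: PiE_iff divide_ennreal)
  also have "\<dots> = ennreal ((1 / real p) ^ (n * m))"
    by (simp add: prod_ennreal card_cartesian_product ennreal_power)
  finally show ?thesis
    by (simp add: measure_def)
qed

definition redp :: "nat \<Rightarrow> nat \<Rightarrow> nat \<Rightarrow> (nat \<times> nat \<Rightarrow> nat \<times> nat \<Rightarrow> nat) \<Rightarrow> (nat \<times> nat \<Rightarrow> nat)" where
  "redp n m p A = (\<lambda>ij\<in>{..<n} \<times> {..<m}. A ij (p, 0))"

lemma red_union:
  assumes "prime p" "X \<subseteq> (\<Pi>\<^sub>E ij\<in>{..<n} \<times> {..<m}. {0..<p})"
  shows "{A \<in> space (zhat_random_matrix n m). redp n m p A \<in> X} = (\<Union>c\<in>X. cylC n m p c)"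
proof (rule set_eqI)
  fix A
  show "A \<in> {A \<in> space (zhat_random_matrix n m). redp n m p A \<in> X} \<longleftrightarrow> A \<in> (\<Union>c\<in>X. cylC n m p c)"
  proof
    assume "A \<in> {A \<in> space (zhat_random_matrix n m). redp n m p A \<in> X}"
    then show "A \<in> (\<Union>c\<in>X. cylC n m p c)"
      by (auto simp: space_mat cylC_def redp_def PiE_iff intro!: bexI[of _ "redp n m p A"])
  next
    assume "A \<in> (\<Union>c\<in>X. cylC n m p c)"
    then obtain c where c: "c \<in> X" "A \<in> cylC n m p c" by auto
    have "redp n m p A = c"
      using c assms(2) by (auto simp: cylC_def redp_def PiE_iff fun_eq_iff extensional_def)
    then show "A \<in> {A \<in> space (zhat_random_matrix n m). redp n m p A \<in> X}"
      using c by (auto simp: cylC_def space_mat PiE_iff)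
  qed
qed

lemma red_sets:
  assumes "prime p" "X \<subseteq> (\<Pi>\<^sub>E ij\<in>{..<n} \<times> {..<m}. {0..<p})"
  shows "{A \<in> space (zhat_random_matrix n m). redp n m p A \<in> X} \<in> sets (zhat_random_matrix n m)"
proof -
  have "finite X" using assms(2) by (rule finite_subset) (auto intro!: finite_PiE)
  then show ?thesis unfolding red_union[OF assms]
    using assms by (auto intro!: cylC_sets)
qed

lemma red_measure:
  assumes "prime p" "X \<subseteq> (\<Pi>\<^sub>E ij\<in>{..<n} \<times> {..<m}. {0..<p})"
  shows "measure (zhat_random_matrix n m) {A \<in> space (zhat_random_matrix n m). redp n m p A \<in> X}
     \<le> card X * (1 / real p) ^ (n * m)"
proof -
  have fin: "finite X" using assms(2) by (rule finite_subset) (auto intro!: finite_PiE)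
  have "measure (zhat_random_matrix n m) (\<Union>c\<in>X. cylC n m p c) \<le> (\<Sum>c\<in>X. measure (zhat_random_matrix n m) (cylC n m p c))"
    using fin assms by (intro measure_UNION_le) (auto intro!: cylC_sets)
  also have "\<dots> = card X * (1 / real p) ^ (n * m)"
    using assms by (simp add: cylC_measure subset_iff)
  finally show ?thesis unfolding red_union[OF assms] .
qed

definition badX :: "nat \<Rightarrow> nat \<Rightarrow> nat \<Rightarrow> (nat \<times> nat \<Rightarrow> nat) set" where
  "badX n m p = {c \<in> (\<Pi>\<^sub>E ij\<in>{..<n} \<times> {..<m}. {0..<p}). \<exists>v \<in> (\<Pi>\<^sub>E i\<in>{..<n}. {0..<int p}).
      (\<exists>i<n. v i \<noteq> 0) \<and> (\<forall>j<m. int p dvd (\<Sum>i<n. v i * int (c (i, j))))}"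

definition Xv :: "nat \<Rightarrow> nat \<Rightarrow> nat \<Rightarrow> (nat \<Rightarrow> int) \<Rightarrow> (nat \<times> nat \<Rightarrow> nat) set" where
  "Xv n m p v = {c \<in> (\<Pi>\<^sub>E ij\<in>{..<n} \<times> {..<m}. {0..<p}). (\<forall>j<m. int p dvd (\<Sum>i<n. v i * int (c (i, j))))}"

lemma small_dvd_zero:
  fixes x :: int
  assumes "p dvd x" "\<bar>x\<bar> < p" shows "x = 0"
proof (rule ccontr)
  assume "x \<noteq> 0"
  then have "\<bar>p\<bar> \<le> \<bar>x\<bar>" using assms(1) by (rule dvd_imp_le_int)
  then show False using assms(2) by linarith
qed

lemma Xv_card:
  assumes "prime p" "i0 < n" "0 < v i0" "v i0 < int p"
  shows "card (Xv n m p v) \<le> p ^ (n * m - m)"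
proof -
  let ?I = "{..<n} \<times> {..<m}" and ?R = "{i0} \<times> {..<m}"
  have inj: "inj_on (\<lambda>c. restrict c (?I - ?R)) (Xv n m p v)"
  proof (rule inj_onI)
    fix c c' assume c: "c \<in> Xv n m p v" and c': "c' \<in> Xv n m p v"
      and eq: "restrict c (?I - ?R) = restrict c' (?I - ?R)"
    have cc: "c \<in> (\<Pi>\<^sub>E ij\<in>?I. {0..<p}) \<and> (\<forall>j<m. int p dvd (\<Sum>i<n. v i * int (c (i, j))))"
      using c unfolding Xv_def by (rule CollectD)
    have cP: "c \<in> (\<Pi>\<^sub>E ij\<in>?I. {0..<p})" and cD: "\<And>j. j < m \<Longrightarrow> int p dvd (\<Sum>i<n. v i * int (c (i, j)))"
      using cc by blast+
    have cc': "c' \<in> (\<Pi>\<^sub>E ij\<in>?I. {0..<p}) \<and> (\<forall>j<m. int p dvd (\<Sum>i<n. v i * int (c' (i, j))))"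
      using c' unfolding Xv_def by (rule CollectD)
    have cP': "c' \<in> (\<Pi>\<^sub>E ij\<in>?I. {0..<p})" and cD': "\<And>j. j < m \<Longrightarrow> int p dvd (\<Sum>i<n. v i * int (c' (i, j)))"
      using cc' by blast+
    have eq1: "c (i, j) = c' (i, j)" if "i < n" "j < m" "i \<noteq> i0" for i j
    proof -
      have "restrict c (?I - ?R) (i, j) = restrict c' (?I - ?R) (i, j)" using eq by simp
      moreover have "(i, j) \<in> ?I - ?R" using that by blast
      ultimately show ?thesis using that(3) by simp
    qed
    have eq2: "c (i0, j) = c' (i0, j)" if "j < m" for j
    proof -
      have s: "(\<Sum>i<n. v i * int (d (i, j))) = v i0 * int (d (i0, j)) + (\<Sum>i\<in>{..<n} - {i0}. v i * int (d (i, j)))" for d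
      proof -
        have "i0 \<in> {..<n}" using assms(2) by simp
        then show ?thesis by (subst sum.remove[of _ i0]) simp_all
      qed
      have s2: "(\<Sum>i\<in>{..<n} - {i0}. v i * int (c (i, j))) = (\<Sum>i\<in>{..<n} - {i0}. v i * int (c' (i, j)))"
        by (rule sum.cong[OF refl]) (simp add: eq1 that)
      have "int p dvd (\<Sum>i<n. v i * int (c (i, j))) - (\<Sum>i<n. v i * int (c' (i, j)))"
        using cD[OF that] cD'[OF that] by (rule dvd_diff)
      also have "(\<Sum>i<n. v i * int (c (i, j))) - (\<Sum>i<n. v i * int (c' (i, j))) = v i0 * (int (c (i0, j)) - int (c' (i0, j)))"
        unfolding s s2 by (simp add: algebra_simps)
      finally have d: "int p dvd v i0 * (int (c (i0, j)) - int (c' (i0, j)))" .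
      have nd: "\<not> int p dvd v i0"
        using assms(3,4) by (meson zdvd_not_zless)
      have pp: "prime (int p)" using assms(1) by simp
      have d2: "int p dvd (int (c (i0, j)) - int (c' (i0, j)))"
        using pp d nd prime_dvd_mult_iff by blast
      have mem: "(i0, j) \<in> ?I" using assms(2) that by blast
      have "c (i0, j) < p" using PiE_mem[OF cP mem] by simp
      moreover have "c' (i0, j) < p" using PiE_mem[OF cP' mem] by simp
      ultimately have "int (c (i0, j)) - int (c' (i0, j)) = 0"
        using d2 by (intro small_dvd_zero[of "int p"]) auto
      then show ?thesis by simp
    qed
    show "c = c'"
    proof (rule ext)
      fix ij show "c ij = c' ij"
      proof (cases "ij \<in> ?I")
        case True then obtain i j where ij: "ij = (i, j)" "i < n" "j < m" by blast
        then show ?thesis using eq1 eq2 by (cases "i = i0") auto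
      next
        case False
        have "c \<in> extensional ?I" using cP[unfolded PiE_def, THEN IntD2] .
        moreover have "c' \<in> extensional ?I" using cP'[unfolded PiE_def, THEN IntD2] .
        ultimately show ?thesis using extensional_arb[OF _ False] by metis
      qed
    qed
  qed
  have fIR: "finite (?I - ?R)" by auto
  have sub: "(\<lambda>c. restrict c (?I - ?R)) ` (Xv n m p v) \<subseteq> (\<Pi>\<^sub>E ij\<in>?I - ?R. {0..<p})"
  proof (rule image_subsetI)
    fix c assume "c \<in> Xv n m p v"
    then have c: "c \<in> (\<Pi>\<^sub>E ij\<in>?I. {0..<p})" by (simp add: Xv_def)
    show "restrict c (?I - ?R) \<in> (\<Pi>\<^sub>E ij\<in>?I - ?R. {0..<p})"
      by (subst restrict_PiE_iff) (use c in \<open>blast dest: PiE_mem\<close>)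
  qed
  have fP: "finite (\<Pi>\<^sub>E ij\<in>?I - ?R. {0..<p})"
    using fIR by (intro finite_PiE) auto
  have "card (Xv n m p v) \<le> card (\<Pi>\<^sub>E ij\<in>?I - ?R. {0..<p})"
    using card_inj_on_le[OF inj sub fP] .
  also have "\<dots> = (\<Prod>ij\<in>?I - ?R. card {0..<p})"
    using fIR by (rule card_PiE)
  also have "\<dots> = p ^ card (?I - ?R)"
    by simp
  also have "card (?I - ?R) = n * m - m"
  proof -
    have "?R \<subseteq> ?I" using assms(2) by auto
    then have "card (?I - ?R) = card ?I - card ?R"
      by (intro card_Diff_subset) auto
    then show ?thesis by (simp add: card_cartesian_product)
  qed
  finally show ?thesis .
qed

lemma badX_sub: "badX n m p \<subseteq> (\<Pi>\<^sub>E ij\<in>{..<n} \<times> {..<m}. {0..<p})"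
  by (auto simp: badX_def)

lemma badX_card:
  assumes "prime p" "0 < n"
  shows "card (badX n m p) \<le> p ^ n * p ^ (n * m - m)"
proof -
  let ?V = "{v \<in> (\<Pi>\<^sub>E i\<in>{..<n}. {0..<int p}). \<exists>i<n. v i \<noteq> 0}"
  have fV: "finite ?V" by (auto intro!: finite_PiE)
  have "badX n m p = (\<Union>v\<in>?V. Xv n m p v)"
    by (auto simp: badX_def Xv_def)
  then have "card (badX n m p) \<le> (\<Sum>v\<in>?V. card (Xv n m p v))"
    by (simp add: card_UN_le fV)
  also have "\<dots> \<le> (\<Sum>v\<in>?V. p ^ (n * m - m))"
  proof (rule sum_mono)
    fix v assume v: "v \<in> ?V"
    then obtain i0 where "i0 < n" "v i0 \<noteq> 0" by auto
    moreover have "0 \<le> v i0" "v i0 < int p" using v \<open>i0 < n\<close> by (auto simp: PiE_iff)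
    ultimately show "card (Xv n m p v) \<le> p ^ (n * m - m)"
      using Xv_card[OF assms(1), of i0 n v m] by auto
  qed
  also have "\<dots> = card ?V * p ^ (n * m - m)" by simp
  also have "card ?V \<le> card (\<Pi>\<^sub>E i\<in>{..<n}. {0..<int p})"
    by (rule card_mono) (auto intro!: finite_PiE)
  also have "card (\<Pi>\<^sub>E i\<in>{..<n}. {0..<int p}) = p ^ n"
    by (simp add: card_PiE)
  finally show ?thesis by simp
qed

lemma bad_measure:
  assumes "prime p"
  shows "measure (zhat_random_matrix n (n + u)) {A \<in> space (zhat_random_matrix n (n + u)). redp n (n + u) p A \<in> badX n (n + u) p}
     \<le> (1 / real p) ^ u"
proof (cases "n = 0")
  case True
  then have "badX n (n + u) p = {}" by (auto simp: badX_def)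
  then show ?thesis by simp
next
  case False
  let ?m = "n + u"
  have p0: "real p > 0" using assms prime_gt_0_nat by auto
  have "measure (zhat_random_matrix n ?m) {A \<in> space (zhat_random_matrix n ?m). redp n ?m p A \<in> badX n ?m p}
      \<le> card (badX n ?m p) * (1 / real p) ^ (n * ?m)"
    by (rule red_measure[OF assms badX_sub])
  also have "\<dots> \<le> real (p ^ n * p ^ (n * ?m - ?m)) * (1 / real p) ^ (n * ?m)"
    apply (rule mult_right_mono)
     apply (subst of_nat_le_iff)
    using badX_card[OF assms, of n ?m] False by auto
  also have "\<dots> = (1 / real p) ^ u"
  proof -
    have e: "n + (n * ?m - ?m) + u = n * ?m"
      using False by (cases n) (auto simp: algebra_simps)
    have "real (p ^ n * p ^ (n * ?m - ?m)) * (1 / real p) ^ (n * ?m) * real p ^ u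
        = real p ^ (n + (n * ?m - ?m) + u) * (1 / real p) ^ (n * ?m)"
      by (simp add: power_add)
    also have "\<dots> = 1" unfolding e using p0 by (simp add: power_one_over)
    finally show ?thesis using p0 by (simp add: field_simps power_one_over)
  qed
  finally show ?thesis .
qed

lemma dual:
  fixes p :: nat and H :: "(nat \<Rightarrow> int) set"
  assumes p: "prime p"
    and add: "\<And>h g. h \<in> H \<Longrightarrow> g \<in> H \<Longrightarrow> (\<lambda>i. h i + g i) \<in> H"
    and smul: "\<And>h c. h \<in> H \<Longrightarrow> (\<lambda>i. c * h i) \<in> H"
    and ne: "H \<noteq> {}"
    and nspan: "\<not> (\<forall>t. \<exists>h\<in>H. \<forall>i<n. int p dvd (h i - t i))"
  shows "\<exists>v. (\<exists>i<n. \<not> int p dvd v i) \<and> (\<forall>h\<in>H. int p dvd (\<Sum>i<n. v i * h i))"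
  using add smul ne nspan
proof (induction n arbitrary: H)
  case 0
  then show ?case by auto
next
  case (Suc n)
  note addH = Suc.prems(1) and smulH = Suc.prems(2) and neH = Suc.prems(3) and nsp = Suc.prems(4)
  have pp: "prime (int p)" using p by simp
  show ?case
  proof (cases "\<forall>h\<in>H. int p dvd h n")
    case True
    let ?v = "\<lambda>i::nat. if i = n then 1 else (0::int)"
    have "\<not> int p dvd ?v n" using prime_gt_1_nat[OF p] by simp
    moreover have "(\<Sum>i<Suc n. ?v i * h i) = h n" for h
      by (simp add: sum.If_cases)
    ultimately show ?thesis using True by (intro exI[of _ ?v]) auto
  next
    case False
    then obtain w0 where w0: "w0 \<in> H" "\<not> int p dvd w0 n" by auto
    have "coprime (int p) (w0 n)" using pp w0(2) by (rule prime_imp_coprime)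
    then have "coprime (w0 n) (int p)" by (simp add: ac_simps)
    then obtain c where c: "[w0 n * c = 1] (mod int p)" using cong_solve_coprime_int by blast
    define w where "w = (\<lambda>i. c * w0 i)"
    have wH: "w \<in> H" unfolding w_def by (rule smulH[OF w0(1)])
    have wn: "int p dvd (w n - 1)"
      using c unfolding w_def by (simp add: cong_iff_dvd_diff ac_simps cong_sym_eq)
    define tr where "tr = (\<lambda>h i. h i - h n * w i)"
    define H' where "H' = tr ` H"
    have add': "(\<lambda>i. h i + g i) \<in> H'" if hg: "h \<in> H'" "g \<in> H'" for h g
    proof -
      obtain h0 g0 where "h0 \<in> H" "g0 \<in> H" "h = tr h0" "g = tr g0" using hg unfolding H'_def by blast
      moreover have "tr (\<lambda>i. h0 i + g0 i) = (\<lambda>i. tr h0 i + tr g0 i)"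
        unfolding tr_def by (auto simp: algebra_simps)
      ultimately show ?thesis unfolding H'_def using addH by (metis image_eqI)
    qed
    have smul': "(\<lambda>i. d * h i) \<in> H'" if hH: "h \<in> H'" for h d
    proof -
      obtain h0 where "h0 \<in> H" "h = tr h0" using hH unfolding H'_def by blast
      moreover have "tr (\<lambda>i. d * h0 i) = (\<lambda>i. d * tr h0 i)"
        unfolding tr_def by (auto simp: algebra_simps)
      ultimately show ?thesis unfolding H'_def using smulH by (metis image_eqI)
    qed
    show ?thesis
    proof (cases "\<forall>t. \<exists>h\<in>H'. \<forall>i<n. int p dvd (h i - t i)")
      case True
      have "\<forall>t. \<exists>h\<in>H. \<forall>i<Suc n. int p dvd (h i - t i)"
      proof
        fix t
        obtain h' where h': "h' \<in> H'" "\<forall>i<n. int p dvd (h' i - tr t i)" using True by blast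
        obtain h where h: "h \<in> H" "h' = tr h" using h'(1) unfolding H'_def by blast
        define g where "g = (\<lambda>i. (\<lambda>i. h i + (\<lambda>i. (- h n) * w i) i) i + (\<lambda>i. t n * w i) i)"
        have gH: "g \<in> H" unfolding g_def
          by (intro addH smulH h(1) wH)
        have "int p dvd (g i - t i)" if "i < Suc n" for i
        proof (cases "i = n")
          case True
          have "g i - t i = (t n - h n) * (w n - 1)" unfolding g_def True by (simp add: algebra_simps)
          then show ?thesis using wn by simp
        next
          case False
          then have "i < n" using that by simp
          have "g i - t i = h' i - tr t i" unfolding g_def h(2) tr_def by (simp add: algebra_simps)
          then show ?thesis using h'(2) \<open>i < n\<close> by simp
        qed
        then show "\<exists>h\<in>H. \<forall>i<Suc n. int p dvd (h i - t i)" using gH by blast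
      qed
      then show ?thesis using nsp by blast
    next
      case False
      obtain v' where v': "\<exists>i<n. \<not> int p dvd v' i" "\<forall>h\<in>H'. int p dvd (\<Sum>i<n. v' i * h i)"
        using Suc.IH[OF add' smul' _ False] neH unfolding H'_def by blast
      define v where "v = v'(n := - (\<Sum>i<n. v' i * w i))"
      have "int p dvd (\<Sum>i<Suc n. v i * h i)" if "h \<in> H" for h
      proof -
        have "(\<Sum>i<Suc n. v i * h i) = (\<Sum>i<n. v' i * h i) - h n * (\<Sum>i<n. v' i * w i)"
          unfolding v_def by (simp add: algebra_simps)
        also have "\<dots> = (\<Sum>i<n. v' i * tr h i)"
          unfolding tr_def by (simp add: algebra_simps sum_subtractf sum_distrib_left)
        finally show ?thesis using v'(2) that unfolding H'_def by auto
      qed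
      moreover have "\<exists>i<Suc n. \<not> int p dvd v i" using v' unfolding v_def by auto
      ultimately show ?thesis by blast
    qed
  qed
qed

lemma lift_step:
  fixes p :: nat and a :: "nat \<Rightarrow> nat \<Rightarrow> nat \<Rightarrow> int" and y :: "nat \<Rightarrow> nat \<Rightarrow> int"
  assumes p: "prime p"
  and acomp: "\<And>k i j. int p ^ k dvd (a (Suc k) i j - a k i j)"
  and abase: "\<And>k i j. int p dvd (a (Suc k) i j - a 1 i j)"
  and ycomp: "\<And>k i. int p ^ k dvd (y (Suc k) i - y k i)"
  and span: "\<And>t. \<exists>d. \<forall>i<n. int p dvd ((\<Sum>j<m. a 1 i j * d j) - t i)"
  and inv: "\<forall>i<n. int p ^ k dvd ((\<Sum>j<m. a k i j * X j) - y k i)"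
  shows "\<exists>d. (\<forall>j. 0 \<le> d j \<and> d j < int p) \<and>
     (\<forall>i<n. int p ^ Suc k dvd ((\<Sum>j<m. a (Suc k) i j * (X j + int p ^ k * d j)) - y (Suc k) i))"
proof -
  define E where "E = (\<lambda>i. (\<Sum>j<m. a (Suc k) i j * X j) - y (Suc k) i)"
  have Ed: "int p ^ k dvd E i" if "i < n" for i
  proof -
    have s1: "(\<Sum>j<m. (a (Suc k) i j - a k i j) * X j) = (\<Sum>j<m. a (Suc k) i j * X j) - (\<Sum>j<m. a k i j * X j)"
      by (simp add: left_diff_distrib sum_subtractf)
    have eq: "E i = ((\<Sum>j<m. a k i j * X j) - y k i) + ((\<Sum>j<m. (a (Suc k) i j - a k i j) * X j) - (y (Suc k) i - y k i))"
      unfolding E_def s1 by simp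
    have d1: "int p ^ k dvd (\<Sum>j<m. (a (Suc k) i j - a k i j) * X j)"
      by (rule dvd_sum, rule dvd_mult2, rule acomp)
    have d2: "int p ^ k dvd ((\<Sum>j<m. a k i j * X j) - y k i)" using inv that by blast
    have d3: "int p ^ k dvd (y (Suc k) i - y k i)" by (rule ycomp)
    show ?thesis unfolding eq by (rule dvd_add[OF d2 dvd_diff[OF d1 d3]])
  qed
  define r where "r = (\<lambda>i. E i div int p ^ k)"
  have Er: "E i = int p ^ k * r i" if "i < n" for i
    using Ed[OF that] unfolding r_def by simp
  obtain d0 where d0: "\<forall>i<n. int p dvd ((\<Sum>j<m. a 1 i j * d0 j) - (- r i))"
    using span[of "\<lambda>i. - r i"] by blast
  define d where "d = (\<lambda>j. d0 j mod int p)"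
  have p0: "int p > 0" using p prime_gt_0_nat by simp
  have drange: "\<forall>j. 0 \<le> d j \<and> d j < int p" unfolding d_def using p0 by simp
  have key: "int p dvd (r i + (\<Sum>j<m. a (Suc k) i j * d j))" if "i < n" for i
  proof -
    have "r i + (\<Sum>j<m. a (Suc k) i j * d j) = ((\<Sum>j<m. a 1 i j * d0 j) - (- r i))
        - (\<Sum>j<m. a 1 i j * (d0 j - d j)) + (\<Sum>j<m. (a (Suc k) i j - a 1 i j) * d j)"
    proof -
      have s1: "(\<Sum>j<m. a 1 i j * (d0 j - d j)) = (\<Sum>j<m. a 1 i j * d0 j) - (\<Sum>j<m. a 1 i j * d j)"
        by (simp add: right_diff_distrib sum_subtractf)
      have s2: "(\<Sum>j<m. (a (Suc k) i j - a 1 i j) * d j) = (\<Sum>j<m. a (Suc k) i j * d j) - (\<Sum>j<m. a 1 i j * d j)"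
        by (simp add: left_diff_distrib sum_subtractf)
      show ?thesis unfolding s1 s2 by simp
    qed
    moreover have "int p dvd (\<Sum>j<m. a 1 i j * (d0 j - d j))"
    proof (rule dvd_sum)
      fix j
      have "d0 j - d j = int p * (d0 j div int p)" unfolding d_def by (rule minus_mod_eq_mult_div)
      then show "int p dvd a 1 i j * (d0 j - d j)" by simp
    qed
    moreover have "int p dvd (\<Sum>j<m. (a (Suc k) i j - a 1 i j) * d j)"
      by (rule dvd_sum, rule dvd_mult2, rule abase)
    moreover have "int p dvd ((\<Sum>j<m. a 1 i j * d0 j) - (- r i))" using d0 that by blast
    ultimately show ?thesis by (simp only:) (rule dvd_add[OF dvd_diff])
  qed
  have "int p ^ Suc k dvd ((\<Sum>j<m. a (Suc k) i j * (X j + int p ^ k * d j)) - y (Suc k) i)" if "i < n" for i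
  proof -
    have "(\<Sum>j<m. a (Suc k) i j * (X j + int p ^ k * d j)) - y (Suc k) i
        = E i + int p ^ k * (\<Sum>j<m. a (Suc k) i j * d j)"
    proof -
      have s1: "(\<Sum>j<m. a (Suc k) i j * (X j + int p ^ k * d j)) = (\<Sum>j<m. a (Suc k) i j * X j) + int p ^ k * (\<Sum>j<m. a (Suc k) i j * d j)"
        by (simp add: distrib_left sum.distrib sum_distrib_left mult.left_commute)
      show ?thesis unfolding E_def s1 by simp
    qed
    also have "\<dots> = int p ^ k * (r i + (\<Sum>j<m. a (Suc k) i j * d j))"
      using Er[OF that] by (simp add: algebra_simps)
    moreover have "int p ^ k * int p dvd int p ^ k * (r i + (\<Sum>j<m. a (Suc k) i j * d j))"
      using key[OF that] by (rule mult_dvd_mono[OF dvd_refl])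
    moreover have "int p ^ Suc k = int p ^ k * int p" by simp
    ultimately show ?thesis by simp
  qed
  then show ?thesis using drange by blast
qed

lemma lift:
  fixes p :: nat and a :: "nat \<Rightarrow> nat \<Rightarrow> nat \<Rightarrow> int" and y :: "nat \<Rightarrow> nat \<Rightarrow> int"
  assumes p: "prime p"
  and acomp: "\<And>k i j. int p ^ k dvd (a (Suc k) i j - a k i j)"
  and abase: "\<And>k i j. int p dvd (a (Suc k) i j - a 1 i j)"
  and ycomp: "\<And>k i. int p ^ k dvd (y (Suc k) i - y k i)"
  and span: "\<And>t. \<exists>d. \<forall>i<n. int p dvd ((\<Sum>j<m. a 1 i j * d j) - t i)"
  shows "\<exists>D. (\<forall>k j. 0 \<le> D k j \<and> D k j < int p) \<and>
     (\<forall>k i. i < n \<longrightarrow> int p ^ k dvd ((\<Sum>j<m. a k i j * (\<Sum>l<k. D l j * int p ^ l)) - y k i))"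
proof -
  define P where "P = (\<lambda>k X d. (\<forall>j. 0 \<le> d j \<and> d j < int p) \<and>
     (\<forall>i<n. int p ^ Suc k dvd ((\<Sum>j<m. a (Suc k) i j * (X j + int p ^ k * d j)) - y (Suc k) i)))"
  define F where "F = (\<lambda>k X. SOME d. P k X d)"
  define Xs where "Xs = rec_nat (\<lambda>j. 0::int) (\<lambda>k Xk j. Xk j + int p ^ k * F k Xk j)"
  have Xs0: "Xs 0 = (\<lambda>j. 0)" by (simp add: Xs_def)
  have XsS: "Xs (Suc k) = (\<lambda>j. Xs k j + int p ^ k * F k (Xs k) j)" for k by (simp add: Xs_def)
  have inv: "\<forall>i<n. int p ^ k dvd ((\<Sum>j<m. a k i j * Xs k j) - y k i)" for k
  proof (induction k)
    case 0 show ?case by simp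
  next
    case (Suc k)
    have "\<exists>d. P k (Xs k) d" unfolding P_def by (rule lift_step[OF p acomp abase ycomp span Suc.IH])
    then have "P k (Xs k) (F k (Xs k))" unfolding F_def by (rule someI_ex)
    then show ?case unfolding P_def XsS by blast
  qed
  have PF: "P k (Xs k) (F k (Xs k))" for k
  proof -
    have "\<exists>d. P k (Xs k) d" unfolding P_def by (rule lift_step[OF p acomp abase ycomp span inv])
    then show ?thesis unfolding F_def by (rule someI_ex)
  qed
  define D where "D = (\<lambda>k. F k (Xs k))"
  have XsD: "Xs k j = (\<Sum>l<k. D l j * int p ^ l)" for k j
    by (induction k) (simp_all add: XsS D_def Xs0 ac_simps)
  have "\<forall>k j. 0 \<le> D k j \<and> D k j < int p" using PF unfolding P_def D_def by blast
  moreover have "\<forall>k i. i < n \<longrightarrow> int p ^ k dvd ((\<Sum>j<m. a k i j * (\<Sum>l<k. D l j * int p ^ l)) - y k i)"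
    using inv unfolding XsD by blast
  ultimately show ?thesis by blast
qed

lemma zres_Suc: "zres x p (Suc k) = zres x p k + int (x (p, k)) * int p ^ k"
  by (simp add: zres_def)

lemma zres_1: "zres x p 1 = int (x (p, 0))"
  by (simp add: zres_def)

lemma zres_comp: "int p ^ k dvd (zres x p (Suc k) - zres x p k)"
  by (simp add: zres_Suc)

lemma zres_base: "int p dvd (zres x p (Suc k) - zres x p 1)"
proof (induction k)
  case 0 show ?case by simp
next
  case (Suc k)
  have "zres x p (Suc (Suc k)) - zres x p 1 = (zres x p (Suc k) - zres x p 1) + int (x (p, Suc k)) * int p ^ Suc k"
    by (simp add: zres_Suc[of x p "Suc k"])
  moreover have "int p dvd int (x (p, Suc k)) * int p ^ Suc k" by simp
  ultimately show ?case using Suc.IH by (metis dvd_add)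
qed

lemma zspace_lt:
  assumes "x \<in> zhat_space" "prime p" shows "x (p, k) < p"
proof -
  have "(p, k) \<in> zhat_idx" using assms(2) by (simp add: zhat_idx_def)
  from PiE_mem[OF assms(1)[unfolded zhat_space_def] this] show ?thesis by simp
qed

lemma mat_entry:
  assumes "A \<in> space (zhat_random_matrix n m)" "i < n" "j < m"
  shows "A (i, j) \<in> zhat_space"
proof -
  have "(i, j) \<in> {..<n} \<times> {..<m}" using assms by blast
  from PiE_mem[OF assms(1)[unfolded space_mat] this] show ?thesis .
qed

lemma redp_at: "i < n \<Longrightarrow> j < m \<Longrightarrow> redp n m p A (i, j) = A (i, j) (p, 0)"
  unfolding redp_def by simp

lemma redp_mem:
  assumes A: "A \<in> space (zhat_random_matrix n m)" and p: "prime p"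
  shows "redp n m p A \<in> (\<Pi>\<^sub>E ij\<in>{..<n} \<times> {..<m}. {0..<p})"
  unfolding redp_def
proof (subst restrict_PiE_iff, rule ballI)
  fix ij assume "ij \<in> {..<n} \<times> {..<m}"
  then obtain i j where ij: "ij = (i, j)" "i < n" "j < m" by blast
  have "A (i, j) (p, 0) < p" using zspace_lt[OF mat_entry[OF A ij(2,3)] p] .
  then show "A ij (p, 0) \<in> {0..<p}" using ij(1) by simp
qed

lemma bad_of_v:
  assumes A: "A \<in> space (zhat_random_matrix n m)" and p: "prime p"
    and i0: "i0 < n" "\<not> int p dvd v i0"
    and vd: "\<forall>j<m. int p dvd (\<Sum>i<n. v i * int (A (i, j) (p, 0)))"
  shows "redp n m p A \<in> badX n m p"
proof -
  define v' where "v' = restrict (\<lambda>i. v i mod int p) {..<n}"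
  have p0: "int p > 0" using p prime_gt_0_nat by simp
  have r2: "v' \<in> (\<Pi>\<^sub>E i\<in>{..<n}. {0..<int p})"
    unfolding v'_def
  proof (subst restrict_PiE_iff, intro ballI)
    fix i show "v i mod int p \<in> {0..<int p}"
      using pos_mod_sign[OF p0, of "v i"] pos_mod_bound[OF p0, of "v i"] by simp
  qed
  have r3: "v' i0 \<noteq> 0" unfolding v'_def using i0 by (simp add: dvd_eq_mod_eq_0)
  have r4: "int p dvd (\<Sum>i<n. v' i * int (redp n m p A (i, j)))" if j: "j < m" for j
  proof -
    have e1: "(\<Sum>i<n. v' i * int (redp n m p A (i, j))) = (\<Sum>i<n. (v i mod int p) * int (A (i, j) (p, 0)))"
      by (rule sum.cong[OF refl]) (simp add: v'_def redp_at j)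
    have e2: "(\<Sum>i<n. (v i mod int p - v i) * int (A (i, j) (p, 0))) =
       (\<Sum>i<n. (v i mod int p) * int (A (i, j) (p, 0))) - (\<Sum>i<n. v i * int (A (i, j) (p, 0)))"
      by (simp add: left_diff_distrib sum_subtractf)
    have d1: "int p dvd (\<Sum>i<n. (v i mod int p - v i) * int (A (i, j) (p, 0)))"
    proof (rule dvd_sum)
      fix i
      have "v i - v i mod int p = int p * (v i div int p)" by (rule minus_mod_eq_mult_div)
      then have "int p dvd (v i mod int p - v i)"
        by (metis dvd_minus_iff dvd_triv_left minus_diff_eq)
      then show "int p dvd (v i mod int p - v i) * int (A (i, j) (p, 0))" by (rule dvd_mult2)
    qed
    have d2: "int p dvd (\<Sum>i<n. v i * int (A (i, j) (p, 0)))" using vd j by blast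
    have "int p dvd (\<Sum>i<n. (v i mod int p - v i) * int (A (i, j) (p, 0))) + (\<Sum>i<n. v i * int (A (i, j) (p, 0)))"
      by (rule dvd_add[OF d1 d2])
    then show ?thesis unfolding e1 e2 by simp
  qed
  show ?thesis unfolding badX_def
    using redp_mem[OF A p] r2 r3 r4 i0(1) by blast
qed

lemma span_of_good:
  assumes A: "A \<in> space (zhat_random_matrix n m)" and p: "prime p"
    and good: "redp n m p A \<notin> badX n m p"
  shows "\<forall>t. \<exists>d. \<forall>i<n. int p dvd ((\<Sum>j<m. zres (A (i, j)) p 1 * d j) - t i)"
proof (rule ccontr)
  assume nt: "\<not> (\<forall>t. \<exists>d. \<forall>i<n. int p dvd ((\<Sum>j<m. zres (A (i, j)) p 1 * d j) - t i))"
  define f where "f = (\<lambda>d i. \<Sum>j<m. zres (A (i, j)) p 1 * d j)"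
  define H where "H = range f"
  have ns: "\<not> (\<forall>t. \<exists>h\<in>H. \<forall>i<n. int p dvd (h i - t i))"
  proof
    assume h: "\<forall>t. \<exists>h\<in>H. \<forall>i<n. int p dvd (h i - t i)"
    have "\<exists>d. \<forall>i<n. int p dvd ((\<Sum>j<m. zres (A (i, j)) p 1 * d j) - t i)" for t
    proof -
      obtain h where "h \<in> H" "\<forall>i<n. int p dvd (h i - t i)" using h by blast
      then obtain d where "\<forall>i<n. int p dvd (f d i - t i)" unfolding H_def by blast
      then show ?thesis unfolding f_def by blast
    qed
    then show False using nt by blast
  qed
  have addH: "(\<lambda>i. h i + g i) \<in> H" if hg: "h \<in> H" "g \<in> H" for h g
  proof -
    obtain d1 d2 where "h = f d1" "g = f d2" using hg unfolding H_def by blast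
    then have "(\<lambda>i. h i + g i) = f (\<lambda>j. d1 j + d2 j)"
      unfolding f_def by (simp add: distrib_left sum.distrib)
    then show ?thesis unfolding H_def by simp
  qed
  have smulH: "(\<lambda>i. c * h i) \<in> H" if hH: "h \<in> H" for h c
  proof -
    obtain d1 where "h = f d1" using hH unfolding H_def by blast
    then have "(\<lambda>i. c * h i) = f (\<lambda>j. c * d1 j)"
      unfolding f_def by (simp add: sum_distrib_left mult.left_commute)
    then show ?thesis unfolding H_def by simp
  qed
  have neH: "H \<noteq> {}" unfolding H_def by simp
  obtain v where v: "\<exists>i<n. \<not> int p dvd v i" "\<forall>h\<in>H. int p dvd (\<Sum>i<n. v i * h i)"
    using dual[OF p addH smulH neH ns] by blast
  obtain i0 where i0: "i0 < n" "\<not> int p dvd v i0" using v(1) by blast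
  have vd: "\<forall>j<m. int p dvd (\<Sum>i<n. v i * int (A (i, j) (p, 0)))"
  proof (intro allI impI)
    fix j assume j: "j < m"
    define e where "e = (\<lambda>j'::nat. if j' = j then (1::int) else 0)"
    have "f e \<in> H" unfolding H_def by simp
    then have "int p dvd (\<Sum>i<n. v i * f e i)" using v(2) by blast
    moreover have "f e i = int (A (i, j) (p, 0))" for i
    proof -
      have "f e i = (\<Sum>j'<m. (if j' = j then zres (A (i, j')) p 1 else 0))"
        unfolding f_def e_def by (rule sum.cong) auto
      also have "\<dots> = zres (A (i, j)) p 1" using j by (simp add: sum.delta)
      finally show ?thesis by (simp add: zres_def)
    qed
    ultimately show "int p dvd (\<Sum>i<n. v i * int (A (i, j) (p, 0)))" by simp
  qed
  have "redp n m p A \<in> badX n m p" by (rule bad_of_v[OF A p i0 vd])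
  then show False using good by blast
qed

lemma surj_of_good:
  assumes A: "A \<in> space (zhat_random_matrix n m)"
    and good: "\<forall>p. prime p \<longrightarrow> redp n m p A \<notin> badX n m p"
  shows "zhat_mat_surj n m A"
  unfolding zhat_mat_surj_def
proof (intro ballI)
  fix y assume y: "y \<in> {..<n} \<rightarrow>\<^sub>E zhat_space"
  define Q where "Q = (\<lambda>p D. prime p \<longrightarrow> ((\<forall>k j. 0 \<le> D k j \<and> D k j < int p) \<and>
     (\<forall>k i. i < n \<longrightarrow> int p ^ k dvd ((\<Sum>j<m. zres (A (i, j)) p k * (\<Sum>l<k. D l j * int p ^ l)) - zres (y i) p k))))"
  have ex: "\<exists>D. Q p D" for p
  proof (cases "prime p")
    case True
    have sp: "\<forall>t. \<exists>d. \<forall>i<n. int p dvd ((\<Sum>j<m. zres (A (i, j)) p 1 * d j) - t i)"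
      by (rule span_of_good[OF A True]) (use good True in blast)
    have "\<exists>D. (\<forall>k j. 0 \<le> D k j \<and> D k j < int p) \<and>
     (\<forall>k i. i < n \<longrightarrow> int p ^ k dvd ((\<Sum>j<m. zres (A (i, j)) p k * (\<Sum>l<k. D l j * int p ^ l)) - zres (y i) p k))"
      by (rule lift[OF True zres_comp zres_base zres_comp]) (use sp in blast)
    then show ?thesis unfolding Q_def by blast
  next
    case False then show ?thesis unfolding Q_def by blast
  qed
  then have "\<forall>p. \<exists>D. Q p D" by (rule allI)
  then have "\<exists>DD. \<forall>p. Q p (DD p)" by (rule choice)
  then obtain DD where DD0: "\<forall>p. Q p (DD p)" by (rule exE)
  have DD: "(\<forall>k j. 0 \<le> DD p k j \<and> DD p k j < int p) \<and>
     (\<forall>k i. i < n \<longrightarrow> int p ^ k dvd ((\<Sum>j<m. zres (A (i, j)) p k * (\<Sum>l<k. DD p l j * int p ^ l)) - zres (y i) p k))"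
    if pp: "prime p" for p
  proof -
    have "Q p (DD p)" using DD0 by (rule spec)
    then show ?thesis unfolding Q_def using pp by (rule mp)
  qed
  define x where "x = restrict (\<lambda>j. restrict (\<lambda>(q, k). nat (DD q k j)) zhat_idx) {..<m}"
  have xj: "x j (q, l) = nat (DD q l j)" if "j < m" "prime q" for j q l
    using that unfolding x_def by (simp add: zhat_idx_def)
  have xmem: "x \<in> {..<m} \<rightarrow>\<^sub>E zhat_space"
    unfolding x_def
  proof (subst restrict_PiE_iff, intro ballI)
    fix j assume j: "j \<in> {..<m}"
    show "restrict (\<lambda>(q, k). nat (DD q k j)) zhat_idx \<in> zhat_space"
      unfolding zhat_space_def
    proof (subst restrict_PiE_iff, intro ballI)
      fix qk assume qk: "qk \<in> zhat_idx"
      obtain q k where qk': "qk = (q, k)" by fastforce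
      have q: "prime q" using qk qk' by (simp add: zhat_idx_def)
      have "0 \<le> DD q k j" "DD q k j < int q" using DD[OF q] by blast+
      then show "(case qk of (q, k) \<Rightarrow> nat (DD q k j)) \<in> (case qk of (p, k) \<Rightarrow> {0..<p})"
        unfolding qk' by simp
    qed
  qed
  have zx: "zres (x j) q k = (\<Sum>l<k. DD q l j * int q ^ l)" if "j < m" "prime q" for j q k
    unfolding zres_def
  proof (rule sum.cong[OF refl])
    fix l
    have "0 \<le> DD q l j" using DD[OF that(2)] by blast
    then show "int (x j (q, l)) * int q ^ l = DD q l j * int q ^ l"
      using xj[OF that] by simp
  qed
  have "\<forall>i<n. zhat_lincomb_eq m (\<lambda>j. A (i, j)) x (y i)"
    unfolding zhat_lincomb_eq_def
  proof (intro allI impI)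
    fix i q k :: nat assume i: "i < n" and q: "prime q"
    have e: "(\<Sum>j<m. zres (A (i, j)) q k * zres (x j) q k) = (\<Sum>j<m. zres (A (i, j)) q k * (\<Sum>l<k. DD q l j * int q ^ l))"
      by (rule sum.cong[OF refl]) (simp add: zx q)
    have "int q ^ k dvd ((\<Sum>j<m. zres (A (i, j)) q k * (\<Sum>l<k. DD q l j * int q ^ l)) - zres (y i) q k)"
      using DD[OF q] i by blast
    then show "(\<Sum>j<m. zres (A (i, j)) q k * zres (x j) q k) mod int q ^ k = zres (y i) q k mod int q ^ k"
      unfolding e by (simp add: mod_eq_dvd_iff)
  qed
  then show "\<exists>x\<in>{..<m} \<rightarrow>\<^sub>E zhat_space. \<forall>i<n. zhat_lincomb_eq m (\<lambda>j. A (i, j)) x (y i)"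
    using xmem by blast
qed

lemma good_of_surj:
  assumes A: "A \<in> space (zhat_random_matrix n m)" and s: "zhat_mat_surj n m A" and p: "prime p"
  shows "redp n m p A \<notin> badX n m p"
proof
  assume "redp n m p A \<in> badX n m p"
  then obtain v where v: "v \<in> (\<Pi>\<^sub>E i\<in>{..<n}. {0..<int p})" "\<exists>i<n. v i \<noteq> 0"
    "\<forall>j<m. int p dvd (\<Sum>i<n. v i * int (redp n m p A (i, j)))"
    unfolding badX_def by blast
  obtain i0 where i0: "i0 < n" "v i0 \<noteq> 0" using v(2) by blast
  have vr: "0 \<le> v i0" "v i0 < int p" using PiE_mem[OF v(1), of i0] i0(1) by simp_all
  define e where "e = (\<lambda>i. if i = i0 then (1::nat) else 0)"
  define y where "y = restrict (\<lambda>i. restrict (\<lambda>(q, k). if q = p \<and> k = 0 then e i else 0) zhat_idx) {..<n}"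
  have ymem: "y \<in> {..<n} \<rightarrow>\<^sub>E zhat_space"
    unfolding y_def
  proof (subst restrict_PiE_iff, intro ballI)
    fix i assume i: "i \<in> {..<n}"
    show "restrict (\<lambda>(q, k). if q = p \<and> k = 0 then e i else 0) zhat_idx \<in> zhat_space"
      unfolding zhat_space_def
    proof (subst restrict_PiE_iff, intro ballI)
      fix qk assume qk: "qk \<in> zhat_idx"
      obtain q k where qk': "qk = (q, k)" by fastforce
      have q: "prime q" using qk qk' by (simp add: zhat_idx_def)
      have "1 < q" using q by (rule prime_gt_1_nat)
      moreover have "e i \<le> 1" unfolding e_def by simp
      ultimately show "(case qk of (q, k) \<Rightarrow> if q = p \<and> k = 0 then e i else 0) \<in> (case qk of (p, k) \<Rightarrow> {0..<p})"
        unfolding qk' by auto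
    qed
  qed
  obtain x where x: "x \<in> {..<m} \<rightarrow>\<^sub>E zhat_space" "\<forall>i<n. zhat_lincomb_eq m (\<lambda>j. A (i, j)) x (y i)"
    using s ymem unfolding zhat_mat_surj_def by blast
  have row: "int p dvd ((\<Sum>j<m. int (A (i, j) (p, 0)) * int (x j (p, 0))) - int (e i))" if i: "i < n" for i
  proof -
    have "(\<Sum>j<m. zres (A (i, j)) p 1 * zres (x j) p 1) mod int p ^ 1 = zres (y i) p 1 mod int p ^ 1"
      using x(2) i p unfolding zhat_lincomb_eq_def by blast
    moreover have "y i (p, 0) = e i" using i p unfolding y_def by (simp add: zhat_idx_def)
    ultimately show ?thesis by (simp add: zres_def mod_eq_dvd_iff)
  qed
  let ?a = "\<lambda>i j. int (A (i, j) (p, 0))" and ?x = "\<lambda>j. int (x j (p, 0))"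
  have "int p dvd (\<Sum>i<n. v i * ((\<Sum>j<m. ?a i j * ?x j) - int (e i)))"
    by (rule dvd_sum, rule dvd_mult, rule row) simp
  moreover have "(\<Sum>i<n. v i * ((\<Sum>j<m. ?a i j * ?x j) - int (e i)))
      = (\<Sum>j<m. ?x j * (\<Sum>i<n. v i * ?a i j)) - v i0"
  proof -
    have s1: "(\<Sum>i<n. v i * ((\<Sum>j<m. ?a i j * ?x j) - int (e i))) = (\<Sum>i<n. v i * (\<Sum>j<m. ?a i j * ?x j)) - (\<Sum>i<n. v i * int (e i))"
      by (simp add: right_diff_distrib sum_subtractf)
    have s2: "(\<Sum>i<n. v i * int (e i)) = v i0"
    proof -
      have "(\<Sum>i<n. v i * int (e i)) = (\<Sum>i<n. if i = i0 then v i else 0)"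
        unfolding e_def by (rule sum.cong) auto
      also have "\<dots> = v i0" using i0(1) by (simp add: sum.delta)
      finally show ?thesis .
    qed
    have s3: "(\<Sum>i<n. v i * (\<Sum>j<m. ?a i j * ?x j)) = (\<Sum>j<m. ?x j * (\<Sum>i<n. v i * ?a i j))"
      by (simp add: sum_distrib_left sum.swap[of _ "{..<n}"] ac_simps)
    show ?thesis unfolding s1 s2 s3 ..
  qed
  moreover have "int p dvd (\<Sum>j<m. ?x j * (\<Sum>i<n. v i * ?a i j))"
  proof (rule dvd_sum)
    fix j assume j: "j \<in> {..<m}"
    have "(\<Sum>i<n. v i * ?a i j) = (\<Sum>i<n. v i * int (redp n m p A (i, j)))"
      by (rule sum.cong[OF refl]) (use j in \<open>simp add: redp_at\<close>)
    then have "int p dvd (\<Sum>i<n. v i * ?a i j)" using v(3) j by simp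
    then show "int p dvd ?x j * (\<Sum>i<n. v i * ?a i j)" by (rule dvd_mult)
  qed
  ultimately have "int p dvd (\<Sum>j<m. ?x j * (\<Sum>i<n. v i * ?a i j)) - ((\<Sum>j<m. ?x j * (\<Sum>i<n. v i * ?a i j)) - v i0)"
    by (simp only: dvd_diff)
  then have "int p dvd v i0" by simp
  moreover have "0 < v i0" using vr(1) i0(2) by simp
  ultimately show False using vr(2) by (meson zdvd_not_zless)
qed

definition hh :: "nat \<Rightarrow> real" where "hh k = inverse (real k ^ 2)"

lemma hh_summable: "summable hh"
  unfolding hh_def using inverse_power_summable[of 2, where 'a=real] by simp

lemma hh_nonneg: "0 \<le> hh k" unfolding hh_def by simp

lemma prime_pow_bound:
  assumes "prime k" "2 \<le> u"
  shows "(1 / real k) ^ u \<le> (1/2) ^ (u - 2) * hh k"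
proof -
  have k2: "2 \<le> real k" using prime_ge_2_nat[OF assms(1)] by simp
  obtain w where w: "u = w + 2" using le_Suc_ex[OF assms(2)] by (auto simp: add.commute)
  have "(1 / real k) ^ u = (1 / real k) ^ (u - 2) * (1 / real k) ^ 2"
    unfolding w by (simp only: power_add diff_add_inverse2)
  also have "(1 / real k) ^ (u - 2) \<le> (1/2) ^ (u - 2)"
    by (rule power_mono) (use k2 in \<open>auto simp: field_simps\<close>)
  also have "(1 / real k) ^ 2 = hh k" unfolding hh_def by (simp add: power_one_over inverse_eq_divide)
  finally show ?thesis by (simp add: hh_nonneg mult_right_mono)
qed

lemma surj_set_eq:
  fixes n m :: nat
  defines "B \<equiv> (\<lambda>k. if prime k then {A \<in> space (zhat_random_matrix n m). redp n m k A \<in> badX n m k} else {})"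
  shows "{A \<in> space (zhat_random_matrix n m). zhat_mat_surj n m A} = space (zhat_random_matrix n m) - (\<Union>k. B k)"
proof (rule set_eqI)
  fix A
  show "A \<in> {A \<in> space (zhat_random_matrix n m). zhat_mat_surj n m A} \<longleftrightarrow> A \<in> space (zhat_random_matrix n m) - (\<Union>k. B k)"
  proof (cases "A \<in> space (zhat_random_matrix n m)")
    case True
    have "zhat_mat_surj n m A \<longleftrightarrow> (\<forall>p. prime p \<longrightarrow> redp n m p A \<notin> badX n m p)"
      using surj_of_good[OF True] good_of_surj[OF True] by blast
    moreover have "A \<notin> (\<Union>k. B k) \<longleftrightarrow> (\<forall>p. prime p \<longrightarrow> redp n m p A \<notin> badX n m p)"
      unfolding B_def using True by auto
    ultimately show ?thesis using True by blast
  next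
    case False then show ?thesis by blast
  qed
qed

lemma main_bound:
  assumes u2: "2 \<le> u"
  shows "1 - suminf hh * (1/2) ^ (u - 2) \<le> measure (zhat_random_matrix n (n + u))
            {A \<in> space (zhat_random_matrix n (n + u)). zhat_mat_surj n (n + u) A}"
proof -
  let ?M = "zhat_random_matrix n (n + u)"
  interpret prob_space ?M by (rule mat_prob)
  define B where "B = (\<lambda>k. if prime k then {A \<in> space ?M. redp n (n + u) k A \<in> badX n (n + u) k} else {})"
  have Bs: "B k \<in> sets ?M" for k
    unfolding B_def using red_sets[OF _ badX_sub] by simp
  have Bm: "measure ?M (B k) \<le> (1/2) ^ (u - 2) * hh k" for k
  proof (cases "prime k")
    case True
    have "measure ?M (B k) \<le> (1 / real k) ^ u" unfolding B_def using True bad_measure[OF True] by simp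
    also have "\<dots> \<le> (1/2) ^ (u - 2) * hh k" by (rule prime_pow_bound[OF True u2])
    finally show ?thesis .
  next
    case False then show ?thesis unfolding B_def by (simp add: hh_nonneg)
  qed
  have sg: "summable (\<lambda>k. (1/2::real) ^ (u - 2) * hh k)" by (rule summable_mult[OF hh_summable])
  have sB: "summable (\<lambda>k. measure ?M (B k))"
    by (rule summable_comparison_test'[OF sg]) (use Bm in simp)
  have "measure ?M (\<Union>k. B k) \<le> (\<Sum>k. measure ?M (B k))"
    by (rule finite_measure_subadditive_countably) (use Bs sB in auto)
  also have "\<dots> \<le> (\<Sum>k. (1/2::real) ^ (u - 2) * hh k)"
    by (rule suminf_le[OF Bm sB sg])
  also have "\<dots> = suminf hh * (1/2) ^ (u - 2)"
    using suminf_mult[OF hh_summable, of "(1/2::real) ^ (u - 2)"] by simp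
  finally have U: "measure ?M (\<Union>k. B k) \<le> suminf hh * (1/2) ^ (u - 2)" .
  have Us: "(\<Union>k. B k) \<in> sets ?M" using Bs by auto
  have "measure ?M {A \<in> space ?M. zhat_mat_surj n (n + u) A} = measure ?M (space ?M - (\<Union>k. B k))"
    unfolding B_def by (subst surj_set_eq) simp
  also have "\<dots> = 1 - measure ?M (\<Union>k. B k)" by (rule prob_compl[OF Us])
  finally show ?thesis using U by simp
qed

theorem corollary7:
  fixes u :: "nat \<Rightarrow> nat"
  assumes "filterlim u at_top sequentially"
  shows "(\<lambda>n. measure (zhat_random_matrix n (n + u n))
            {A \<in> space (zhat_random_matrix n (n + u n)). zhat_mat_surj n (n + u n) A})
         \<longlonglongrightarrow> 1"
proof (rule tendsto_sandwich)
  let ?f = "\<lambda>n. measure (zhat_random_matrix n (n + u n))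
            {A \<in> space (zhat_random_matrix n (n + u n)). zhat_mat_surj n (n + u n) A}"
  have ev2: "eventually (\<lambda>n. 2 \<le> u n) sequentially"
    using assms by (simp add: filterlim_at_top)
  show "eventually (\<lambda>n. 1 - suminf hh * (1/2) ^ (u n - 2) \<le> ?f n) sequentially"
    using ev2 by eventually_elim (rule main_bound)
  show "eventually (\<lambda>n. ?f n \<le> 1) sequentially"
  proof (rule always_eventually, rule allI)
    fix n
    interpret prob_space "zhat_random_matrix n (n + u n)" by (rule mat_prob)
    show "?f n \<le> 1" by (rule prob_le_1)
  qed
  show "(\<lambda>n. 1::real) \<longlonglongrightarrow> 1" by simp
  have u2: "filterlim (\<lambda>n. u n - 2) sequentially sequentially"
    by (rule filterlim_compose[OF filterlim_minus_const_nat_at_top assms])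
  have p0: "(\<lambda>N. (1/2::real) ^ N) \<longlonglongrightarrow> 0" by (rule LIMSEQ_power_zero) simp
  have "(\<lambda>n. (1/2::real) ^ (u n - 2)) \<longlonglongrightarrow> 0"
    using filterlim_compose[OF p0 u2] by (simp add: o_def)
  then have "(\<lambda>n. 1 - suminf hh * (1/2::real) ^ (u n - 2)) \<longlonglongrightarrow> 1 - suminf hh * 0"
    by (intro tendsto_intros)
  then show "(\<lambda>n. 1 - suminf hh * (1/2::real) ^ (u n - 2)) \<longlonglongrightarrow> 1" by simp
qed

end
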